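(* Fix $\alpha\in(0,1)$ and $p,q\in[0,1]$ with $q=\alpha p$. Let $\hat{\mathcal{M}}^\ast(p,q)$ be the output of the greedy procedure \texttt{OptSupplierSet}$(p,q)$, and let $\mathcal{M}^\ast$ be a maximizer of $R(p,q,\mathcal{M})$ over all $\mathcal{M}\subseteq\widetilde{S}(q)$ with $|\mathcal{M}|\le b$. Then $$R(p,q,\hat{\mathcal{M}}^\ast(p,q))\ \ge\ \Big(1-\frac1e\Big)R(p,q,\mathcal{M}^\ast).$$
   Context: Let $\mathcal{G}=(\mathcal{U},\mathcal{E})$ be a finite directed graph without self-loops, $\mathcal{U}=\{1,\dots,U\}$. For $u,v\in\mathcal{U}$, $D(u,v;\mathcal{G})$ denotes the number of edges of a shortest directed path from $u$ to $v$ in $\mathcal{G}$, with $D(u,v;\mathcal{G})=+\infty$ if there is no such path. For an integer $d\ge0$, the $d$-visible set of $u$ is $\mathcal{V}(u,d;\mathcal{G})=\{v\in\mathcal{U}: D(v,u;\mathcal{G})\le d\}$. Fix an integer social visibility threshold $\tau\ge1$. Let $\mathcal{R}\subseteq\mathcal{U}$ (requesters) and $\mathcal{S}\subseteq\mathcal{U}$ (suppliers) be disjoint. Each requester $u\in\mathcal{R}$ has a valuation $p_u\in[0,1]$ and each supplier $u\in\mathcal{S}$ has a valuation $q_u\in[0,1]$. Let $b$ be a positive integer (budget). For $p\in[0,1]$ let $\widetilde{R}(p)=\{u\in\mathcal{R}: p_u\ge p\}$ and for $q\in[0,1]$ let $\widetilde{S}(q)=\{u\in\mathcal{S}: q_u\le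 q\}$. For $\mathcal{M}\subseteq\mathcal{S}$ let $\widetilde{G}(p,\mathcal{M})$ be the graph obtained from $\mathcal{G}$ by adding a directed edge from every $s\in\mathcal{M}$ to every $r\in\widetilde{R}(p)$. For $u\in\widetilde{R}(p)$ let $I_u(p,\mathcal{M})=|\mathcal{V}(u,\tau;\widetilde{G}(p,\mathcal{M}))\setminus\mathcal{V}(u,\tau;\mathcal{G})|$, and $I(p,\mathcal{M})=\sum_{u\in\widetilde{R}(p)}I_u(p,\mathcal{M})$. The revenue is $R(p,q,\mathcal{M})=p\,I(p,\mathcal{M})-q\,I(p,\mathcal{M})$. The greedy procedure \texttt{OptSupplierSet}$(p,q)$: start with $\mathcal{M}=\emptyset$; for $t=1,\dots,b$, pick $u^\ast\in\widetilde{S}(q)$ maximizing the marginal gain $R(p,q,\mathcal{M}\cup\{u\})-R(p,q,\mathcal{M})$ (ties broken arbitrarily) and set $\mathcal{M}\leftarrow\mathcal{M}\cup\{u^\ast\}$; output $\hat{\mathcal{M}}^\ast(p,q)=\mathcal{M}$ (a subset of $\widetilde{S}(q)$ of size at most $b$). *)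

theory Defs
  imports Complex_Main "HOL-Library.Extended_Nat"
begin

definition dist :: "(nat \<times> nat) set \<Rightarrow> nat \<Rightarrow> nat \<Rightarrow> enat" where
  "dist E u v = (if \<exists>k. (u, v) \<in> E ^^ k then enat (LEAST k. (u, v) \<in> E ^^ k) else \<infinity>)"

definition visible :: "nat \<Rightarrow> (nat \<times> nat) set \<Rightarrow> nat \<Rightarrow> nat \<Rightarrow> nat set" where
  "visible U E u d = {v \<in> {1..U}. dist E v u \<le> enat d}"

definition Rtil :: "nat set \<Rightarrow> (nat \<Rightarrow> real) \<Rightarrow> real \<Rightarrow> nat set" where
  "Rtil Rq pv p = {u \<in> Rq. pv u \<ge> p}"

definition Stil :: "nat set \<Rightarrow> (nat \<Rightarrow> real) \<Rightarrow> real \<Rightarrow> nat set" where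
  "Stil Sp qv q = {u \<in> Sp. qv u \<le> q}"

definition aug_graph :: "(nat \<times> nat) set \<Rightarrow> nat set \<Rightarrow> (nat \<Rightarrow> real) \<Rightarrow> real \<Rightarrow> nat set \<Rightarrow> (nat \<times> nat) set" where
  "aug_graph E Rq pv p M = E \<union> (M \<times> Rtil Rq pv p)"

definition infl_u :: "nat \<Rightarrow> (nat \<times> nat) set \<Rightarrow> nat \<Rightarrow> nat set \<Rightarrow> (nat \<Rightarrow> real) \<Rightarrow> real \<Rightarrow> nat set \<Rightarrow> nat \<Rightarrow> nat" where
  "infl_u U E \<tau> Rq pv p M u =
     card (visible U (aug_graph E Rq pv p M) u \<tau> - visible U E u \<tau>)"

definition infl :: "nat \<Rightarrow> (nat \<times> nat) set \<Rightarrow> nat \<Rightarrow> nat set \<Rightarrow> (nat \<Rightarrow> real) \<Rightarrow> real \<Rightarrow> nat set \<Rightarrow> nat" where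
  "infl U E \<tau> Rq pv p M = (\<Sum>u\<in>Rtil Rq pv p. infl_u U E \<tau> Rq pv p M u)"

definition revenue :: "nat \<Rightarrow> (nat \<times> nat) set \<Rightarrow> nat \<Rightarrow> nat set \<Rightarrow> (nat \<Rightarrow> real) \<Rightarrow> real \<Rightarrow> real \<Rightarrow> nat set \<Rightarrow> real" where
  "revenue U E \<tau> Rq pv p q M =
     p * real (infl U E \<tau> Rq pv p M) - q * real (infl U E \<tau> Rq pv p M)"

definition greedy_step ::
  "nat \<Rightarrow> (nat \<times> nat) set \<Rightarrow> nat \<Rightarrow> nat set \<Rightarrow> (nat \<Rightarrow> real) \<Rightarrow> nat set \<Rightarrow> (nat \<Rightarrow> real)
    \<Rightarrow> real \<Rightarrow> real \<Rightarrow> (nat set \<times> nat set) set" where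
  "greedy_step U E \<tau> Rq pv Sp qv p q =
     {(M, M'). (Stil Sp qv q = {} \<and> M' = M) \<or>
        (\<exists>u\<in>Stil Sp qv q.
           (\<forall>v\<in>Stil Sp qv q.
              revenue U E \<tau> Rq pv p q (insert v M) - revenue U E \<tau> Rq pv p q M
              \<le> revenue U E \<tau> Rq pv p q (insert u M) - revenue U E \<tau> Rq pv p q M)
           \<and> M' = insert u M)}"

text \<open>Possible outputs of OptSupplierSet(p,q) (over all tie-breaking choices): b greedy steps from {}.\<close>
definition greedy_outputs ::
  "nat \<Rightarrow> (nat \<times> nat) set \<Rightarrow> nat \<Rightarrow> nat set \<Rightarrow> (nat \<Rightarrow> real) \<Rightarrow> nat set \<Rightarrow> (nat \<Rightarrow> real)
    \<Rightarrow> real \<Rightarrow> real \<Rightarrow> nat \<Rightarrow> nat set set" where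
  "greedy_outputs U E \<tau> Rq pv Sp qv p q b =
     {M. ({}, M) \<in> (greedy_step U E \<tau> Rq pv Sp qv p q) ^^ b}"

end

theory Submission
  imports Defs
begin

lemma relpow_mono_set: "(A::('a\<times>'a) set) \<subseteq> B \<Longrightarrow> A ^^ n \<subseteq> B ^^ n"
  by (induction n) (simp_all add: relcomp_mono)

lemma walk_split:
  "(v,u) \<in> (E \<union> M \<times> R)^^k \<Longrightarrow> (v,u) \<in> E^^k \<or>
     (\<exists>s\<in>M. \<exists>r\<in>R. \<exists>a c. (v,s)\<in>E^^a \<and> (r,u)\<in>E^^c \<and> a+1+c \<le> k)"
proof (induction k arbitrary: u)
  case 0 thus ?case by simp
next
  case (Suc k)
  from Suc.prems obtain w where vw: "(v,w) \<in> (E \<union> M\<times>R)^^k" and wu: "(w,u) \<in> E \<union> M\<times>R"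
    by (auto elim: relpow_Suc_E)
  from Suc.IH[OF vw] show ?case
  proof
    assume h: "(v,w)\<in>E^^k"
    show ?case using wu
    proof
      assume "(w,u)\<in>E" hence "(v,u) \<in> E^^Suc k" using h by (rule relpow_Suc_I[rotated])
      thus ?case ..
    next
      assume "(w,u) \<in> M\<times>R"
      hence "w \<in> M" "u \<in> R" by auto
      moreover have "(u,u) \<in> E^^0" by simp
      ultimately show ?case using h by (intro disjI2) (metis le_refl add.right_neutral Suc_eq_plus1)
    qed
  next
    assume "\<exists>s\<in>M. \<exists>r\<in>R. \<exists>a c. (v,s)\<in>E^^a \<and> (r,w)\<in>E^^c \<and> a+1+c \<le> k"
    then obtain s r a c where h: "s\<in>M" "r\<in>R" "(v,s)\<in>E^^a" "(r,w)\<in>E^^c" "a+1+c \<le> k" by blast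
    show ?case using wu
    proof
      assume "(w,u)\<in>E" hence "(r,u) \<in> E^^Suc c" using h(4) by (rule relpow_Suc_I[rotated])
      thus ?case using h by (intro disjI2) (metis add_Suc_right Suc_le_mono)
    next
      assume "(w,u) \<in> M\<times>R"
      hence "u \<in> R" by auto
      moreover have "(u,u) \<in> E^^0" by simp
      moreover have "a+1+0 \<le> Suc k" using h by simp
      ultimately show ?case using h by blast
    qed
  qed
qed

lemma walk_join:
  assumes "(v,s)\<in>E^^a" "s\<in>M" "r\<in>R" "(r,u)\<in>E^^c"
  shows "(v,u) \<in> (E \<union> M \<times> R)^^(a+1+c)"
proof -
  let ?F = "E \<union> M \<times> R"
  have "(v,s) \<in> ?F^^a" using assms(1) relpow_mono_set[of E ?F a] by blast
  moreover have "(s,r) \<in> ?F^^1" using assms by auto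
  moreover have "(r,u) \<in> ?F^^c" using assms(4) relpow_mono_set[of E ?F c] by blast
  ultimately show ?thesis unfolding relpow_add by blast
qed

lemma dist_le: "dist E v u \<le> enat d \<longleftrightarrow> (\<exists>k\<le>d. (v,u)\<in>E^^k)"
proof (cases "\<exists>k. (v, u) \<in> E ^^ k")
  case True
  then have d: "dist E v u = enat (LEAST k. (v, u) \<in> E ^^ k)" by (simp add: dist_def)
  show ?thesis unfolding d
  proof
    assume "enat (LEAST k. (v, u) \<in> E ^^ k) \<le> enat d"
    moreover have "(v,u) \<in> E^^(LEAST k. (v, u) \<in> E ^^ k)" using True by (rule LeastI_ex)
    ultimately show "\<exists>k\<le>d. (v,u)\<in>E^^k" by auto
  next
    assume "\<exists>k\<le>d. (v,u)\<in>E^^k"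
    then obtain k where "k \<le> d" "(v,u)\<in>E^^k" by blast
    thus "enat (LEAST k. (v, u) \<in> E ^^ k) \<le> enat d" by (metis Least_le enat_ord_simps(1) order_trans)
  qed
next
  case False thus ?thesis by (simp add: dist_def)
qed

definition Cset :: "nat \<Rightarrow> (nat \<times> nat) set \<Rightarrow> nat set \<Rightarrow> nat \<Rightarrow> nat \<Rightarrow> nat \<Rightarrow> nat set" where
  "Cset U E R u d s = {v\<in>{1..U}. \<exists>r\<in>R. \<exists>a c. (v,s)\<in>E^^a \<and> (r,u)\<in>E^^c \<and> a+1+c \<le> d}"

lemma vis_char:
  "visible U (E \<union> M \<times> R) u d = visible U E u d \<union> (\<Union>s\<in>M. Cset U E R u d s)"
proof (intro equalityI subsetI)
  fix v assume "v \<in> visible U (E \<union> M \<times> R) u d"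
  then obtain k where k: "v \<in> {1..U}" "k \<le> d" "(v,u) \<in> (E \<union> M \<times> R)^^k"
    unfolding visible_def dist_le by blast
  from walk_split[OF k(3)] show "v \<in> visible U E u d \<union> (\<Union>s\<in>M. Cset U E R u d s)"
  proof
    assume "(v,u)\<in>E^^k" thus ?thesis using k unfolding visible_def dist_le by blast
  next
    assume "\<exists>s\<in>M. \<exists>r\<in>R. \<exists>a c. (v,s)\<in>E^^a \<and> (r,u)\<in>E^^c \<and> a+1+c \<le> k"
    thus ?thesis using k unfolding Cset_def by fastforce
  qed
next
  fix v assume "v \<in> visible U E u d \<union> (\<Union>s\<in>M. Cset U E R u d s)"
  thus "v \<in> visible U (E \<union> M \<times> R) u d"
  proof
    assume "v \<in> visible U E u d"
    thus ?thesis unfolding visible_def dist_le using relpow_mono_set[of E "E \<union> M \<times> R"] by blast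
  next
    assume "v \<in> (\<Union>s\<in>M. Cset U E R u d s)"
    then obtain s r a c where h: "s\<in>M" "v \<in> {1..U}" "r\<in>R" "(v,s)\<in>E^^a" "(r,u)\<in>E^^c" "a+1+c \<le> d"
      unfolding Cset_def by blast
    from walk_join[OF h(4,1,3,5)] h show ?thesis unfolding visible_def dist_le by blast
  qed
qed

lemma cov_mono:
  assumes "A \<subseteq> B" "\<And>s. D s \<subseteq> X" "finite X"
  shows "card (\<Union>(D`A)) \<le> card (\<Union>(D`B))"
  by (rule card_mono) (use assms in \<open>auto intro: finite_subset\<close>)

lemma cov_sub:
  assumes "A \<subseteq> B" "\<And>s. D s \<subseteq> X" "finite X"
  shows "real (card (\<Union>(D`insert x B))) - card (\<Union>(D`B))
       \<le> real (card (\<Union>(D`insert x A))) - card (\<Union>(D`A))"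
proof -
  have fin: "\<And>Y. Y \<subseteq> X \<Longrightarrow> finite Y" using assms(3) finite_subset by blast
  have eq: "card (\<Union>(D`insert x C)) = card (D x - \<Union>(D`C)) + card (\<Union>(D`C))" for C
  proof -
    have "\<Union>(D`insert x C) = (D x - \<Union>(D`C)) \<union> \<Union>(D`C)" by auto
    moreover have "finite (D x - \<Union>(D`C))" "finite (\<Union>(D`C))" using assms(2) by (auto intro!: fin)
    moreover have "card ((D x - \<Union>(D`C)) \<union> \<Union>(D`C)) = card (D x - \<Union>(D`C)) + card (\<Union>(D`C))"
      by (rule card_Un_disjoint) (use calculation in auto)
    ultimately show ?thesis by metis
  qed
  have "card (D x - \<Union>(D`B)) \<le> card (D x - \<Union>(D`A))"
    by (rule card_mono) (use assms in \<open>auto intro: fin\<close>, meson Diff_subset finite_subset subset_trans)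
  thus ?thesis unfolding eq by simp
qed


lemma sum_gain:
  fixes g :: "'a set \<Rightarrow> real"
  assumes sub: "\<And>A B x. A \<subseteq> B \<Longrightarrow> g (insert x B) - g B \<le> g (insert x A) - g A"
  and "finite Op"
  shows "g (M \<union> Op) - g M \<le> (\<Sum>y\<in>Op. g (insert y M) - g M)"
  using assms(2)
proof (induction Op rule: finite_induct)
  case empty thus ?case by simp
next
  case (insert x F)
  have "g (insert x (M \<union> F)) - g (M \<union> F) \<le> g (insert x M) - g M" by (rule sub) auto
  thus ?case using insert by simp
qed

lemma greedy_bound:
  fixes g :: "'a set \<Rightarrow> real"
  assumes mono: "\<And>A B. A\<subseteq>B \<Longrightarrow> g A \<le> g B"
  and sub: "\<And>A B x. A \<subseteq> B \<Longrightarrow> g (insert x B) - g B \<le> g (insert x A) - g A"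
  and g0: "g {} \<ge> 0" and finO: "finite Op" and OS: "Op \<subseteq> S" and cardO: "card Op \<le> b" and b: "b > 0"
  and step: "\<And>M M'. (M,M') \<in> St \<Longrightarrow> (S = {} \<and> M' = M) \<or>
     (\<exists>u\<in>S. (\<forall>v\<in>S. g (insert v M) - g M \<le> g (insert u M) - g M) \<and> M' = insert u M)"
  and reach: "({},Mh) \<in> St^^b"
  shows "g Mh \<ge> (1 - 1/exp 1) * g Op"
proof -
  define \<rho> where "\<rho> = 1 - 1 / real b"
  have rho0: "0 \<le> \<rho>" using b by (simp add: \<rho>_def)
  have inv: "g Op - g M \<le> \<rho>^k * (g Op - g {})" if "({},M) \<in> St^^k" for k M
    using that
  proof (induction k arbitrary: M)
    case 0 thus ?case by simp
  next
    case (Suc k)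
    from Suc.prems obtain M0 where m0: "({},M0) \<in> St^^k" "(M0,M) \<in> St" by (auto elim: relpow_Suc_E)
    have IH: "g Op - g M0 \<le> \<rho>^k * (g Op - g {})" using Suc.IH[OF m0(1)] .
    have key: "g Op - g M \<le> \<rho> * (g Op - g M0)"
      using step[OF m0(2)]
    proof
      assume h: "S = {} \<and> M = M0"
      hence "Op = {}" using OS by auto
      hence "g Op - g M0 \<le> 0" using mono[of "{}" M0] by simp
      moreover have "1 / real b \<ge> 0" by simp
      ultimately have "g Op - g M0 \<le> (1 - 1/real b) * (g Op - g M0)"
        by (simp add: algebra_simps divide_right_mono)
      thus ?thesis using h by (simp add: \<rho>_def)
    next
      assume "\<exists>u\<in>S. (\<forall>v\<in>S. g (insert v M0) - g M0 \<le> g (insert u M0) - g M0) \<and> M = insert u M0"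
      then obtain u where u: "\<forall>v\<in>S. g (insert v M0) - g M0 \<le> g (insert u M0) - g M0" "M = insert u M0"
        by blast
      define \<delta> where "\<delta> = g M - g M0"
      have d0: "\<delta> \<ge> 0" unfolding \<delta>_def u(2) using mono[of M0 "insert u M0"] by auto
      have "g Op \<le> g (M0 \<union> Op)" by (rule mono) auto
      also have "\<dots> \<le> g M0 + (\<Sum>y\<in>Op. g (insert y M0) - g M0)"
        using sum_gain[of g Op M0, OF sub finO] by simp
      also have "(\<Sum>y\<in>Op. g (insert y M0) - g M0) \<le> (\<Sum>y\<in>Op. \<delta>)"
        by (rule sum_mono) (use u OS in \<open>auto simp: \<delta>_def\<close>)
      also have "(\<Sum>y\<in>Op. \<delta>) = real (card Op) * \<delta>" by simp
      also have "\<dots> \<le> real b * \<delta>" using cardO d0 by (simp add: mult_right_mono)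
      finally have "g Op - g M0 \<le> real b * \<delta>" by simp
      hence "(g Op - g M0) / real b \<le> \<delta>" using b by (simp add: divide_le_eq mult.commute)
      hence "g Op - g M \<le> (g Op - g M0) - (g Op - g M0) / real b" by (simp add: \<delta>_def)
      thus ?thesis by (simp add: \<rho>_def algebra_simps diff_divide_distrib)
    qed
    also have "\<dots> \<le> \<rho> * (\<rho>^k * (g Op - g {}))" by (rule mult_left_mono[OF IH rho0])
    finally show ?case by simp
  qed
  have D0: "g Op - g {} \<ge> 0" using mono[of "{}" Op] by simp
  have "\<rho> \<le> exp (- 1 / real b)" unfolding \<rho>_def using exp_ge_add_one_self[of "-1/real b"] by simp
  hence "\<rho>^b \<le> exp (- 1 / real b) ^ b" using rho0 by (rule power_mono)
  also have "\<dots> = exp (- 1)" using b by (simp add: exp_of_nat_mult[symmetric])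
  finally have rb: "\<rho>^b \<le> exp (-1)" .
  have "g Op - g Mh \<le> \<rho>^b * (g Op - g {})" by (rule inv[OF reach])
  also have "\<dots> \<le> exp (-1) * (g Op - g {})" using rb D0 by (rule mult_right_mono)
  also have "\<dots> \<le> exp (-1) * g Op" using g0 by (simp add: algebra_simps)
  finally have "g Mh \<ge> (1 - exp (-1)) * g Op" by (simp add: algebra_simps)
  thus ?thesis by (simp add: exp_minus inverse_eq_divide)
qed


lemma rev_formula:
  "revenue U E \<tau> Rq pv p q M = (p - q) * (\<Sum>u\<in>Rtil Rq pv p.
     real (card (\<Union>s\<in>M. Cset U E (Rtil Rq pv p) u \<tau> s - visible U E u \<tau>)))"
proof -
  have "infl_u U E \<tau> Rq pv p M u = card (\<Union>s\<in>M. Cset U E (Rtil Rq pv p) u \<tau> s - visible U E u \<tau>)" for u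
  proof -
    have "visible U (aug_graph E Rq pv p M) u \<tau> - visible U E u \<tau>
        = (\<Union>s\<in>M. Cset U E (Rtil Rq pv p) u \<tau> s - visible U E u \<tau>)"
      unfolding aug_graph_def vis_char by auto
    thus ?thesis by (simp add: infl_u_def)
  qed
  thus ?thesis by (simp add: revenue_def infl_def algebra_simps)
qed

lemma rev_mono:
  assumes "q \<le> p" "A \<subseteq> B"
  shows "revenue U E \<tau> Rq pv p q A \<le> revenue U E \<tau> Rq pv p q B"
  unfolding rev_formula
proof (rule mult_left_mono)
  show "0 \<le> p - q" using assms by simp
  show "(\<Sum>u\<in>Rtil Rq pv p. real (card (\<Union>s\<in>A. Cset U E (Rtil Rq pv p) u \<tau> s - visible U E u \<tau>)))
      \<le> (\<Sum>u\<in>Rtil Rq pv p. real (card (\<Union>s\<in>B. Cset U E (Rtil Rq pv p) u \<tau> s - visible U E u \<tau>)))"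
  proof (rule sum_mono)
    fix u
    have "card (\<Union>s\<in>A. Cset U E (Rtil Rq pv p) u \<tau> s - visible U E u \<tau>)
        \<le> card (\<Union>s\<in>B. Cset U E (Rtil Rq pv p) u \<tau> s - visible U E u \<tau>)"
      by (rule cov_mono[OF assms(2), where X="{1..U}"]) (auto simp: Cset_def)
    thus "real (card (\<Union>s\<in>A. Cset U E (Rtil Rq pv p) u \<tau> s - visible U E u \<tau>))
        \<le> real (card (\<Union>s\<in>B. Cset U E (Rtil Rq pv p) u \<tau> s - visible U E u \<tau>))" by simp
  qed
qed

lemma rev_sub:
  assumes "q \<le> p" "A \<subseteq> B"
  shows "revenue U E \<tau> Rq pv p q (insert x B) - revenue U E \<tau> Rq pv p q B
     \<le> revenue U E \<tau> Rq pv p q (insert x A) - revenue U E \<tau> Rq pv p q A"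
proof -
  define D where "D u s = Cset U E (Rtil Rq pv p) u \<tau> s - visible U E u \<tau>" for u s
  have f: "revenue U E \<tau> Rq pv p q M = (p - q) * (\<Sum>u\<in>Rtil Rq pv p. real (card (\<Union>(D u ` M))))" for M
    unfolding rev_formula D_def by simp
  have "(\<Sum>u\<in>Rtil Rq pv p. real (card (\<Union>(D u ` insert x B))) - real (card (\<Union>(D u ` B))))
      \<le> (\<Sum>u\<in>Rtil Rq pv p. real (card (\<Union>(D u ` insert x A))) - real (card (\<Union>(D u ` A))))"
    by (rule sum_mono, rule cov_sub[OF assms(2), where X="{1..U}"]) (auto simp: Cset_def D_def)
  hence "(p - q) * (\<Sum>u\<in>Rtil Rq pv p. real (card (\<Union>(D u ` insert x B))) - real (card (\<Union>(D u ` B))))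
      \<le> (p - q) * (\<Sum>u\<in>Rtil Rq pv p. real (card (\<Union>(D u ` insert x A))) - real (card (\<Union>(D u ` A))))"
    using assms(1) by (intro mult_left_mono) auto
  thus ?thesis unfolding f by (simp add: sum_subtractf right_diff_distrib)
qed

theorem theorem3:
  fixes U :: nat and E :: "(nat \<times> nat) set" and \<tau> b :: nat
    and Rq Sp :: "nat set" and pv qv :: "nat \<Rightarrow> real"
    and \<alpha> p q :: real and Mhat Mopt :: "nat set"
  assumes graph: "E \<subseteq> {1..U} \<times> {1..U}" and noloops: "\<forall>u. (u, u) \<notin> E"
    and tau: "\<tau> \<ge> 1" and budget: "b > 0"
    and RqU: "Rq \<subseteq> {1..U}" and SpU: "Sp \<subseteq> {1..U}" and disj: "Rq \<inter> Sp = {}"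
    and pv_range: "\<forall>u\<in>Rq. 0 \<le> pv u \<and> pv u \<le> 1"
    and qv_range: "\<forall>u\<in>Sp. 0 \<le> qv u \<and> qv u \<le> 1"
    and alpha: "0 < \<alpha>" "\<alpha> < 1"
    and p_range: "0 \<le> p" "p \<le> 1" and q_range: "0 \<le> q" "q \<le> 1"
    and q_def: "q = \<alpha> * p"
    and greedy: "Mhat \<in> greedy_outputs U E \<tau> Rq pv Sp qv p q b"
    and opt_sub: "Mopt \<subseteq> Stil Sp qv q" and opt_card: "card Mopt \<le> b"
    and opt_max: "\<forall>M. M \<subseteq> Stil Sp qv q \<and> card M \<le> b \<longrightarrow>
                    revenue U E \<tau> Rq pv p q M \<le> revenue U E \<tau> Rq pv p q Mopt"
  shows "revenue U E \<tau> Rq pv p q Mhat \<ge> (1 - 1 / exp 1) * revenue U E \<tau> Rq pv p q Mopt"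
proof -
  have qp: "q \<le> p" using q_def alpha p_range by (simp add: mult_left_le_one_le)
  show ?thesis
  proof (rule greedy_bound[where g="revenue U E \<tau> Rq pv p q" and S="Stil Sp qv q"
        and St="greedy_step U E \<tau> Rq pv Sp qv p q" and b=b])
    show "\<And>A B. A \<subseteq> B \<Longrightarrow> revenue U E \<tau> Rq pv p q A \<le> revenue U E \<tau> Rq pv p q B"
      using qp by (rule rev_mono)
    show "\<And>A B x. A \<subseteq> B \<Longrightarrow> revenue U E \<tau> Rq pv p q (insert x B) - revenue U E \<tau> Rq pv p q B
        \<le> revenue U E \<tau> Rq pv p q (insert x A) - revenue U E \<tau> Rq pv p q A"
      using qp by (rule rev_sub)
    show "0 \<le> revenue U E \<tau> Rq pv p q {}" using qp by (simp add: rev_formula sum_nonneg)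
    have "Stil Sp qv q \<subseteq> Sp" unfolding Stil_def by blast
    hence "Mopt \<subseteq> {1..U}" using opt_sub SpU by blast
    thus "finite Mopt" using finite_subset by blast
    show "Mopt \<subseteq> Stil Sp qv q" by (fact opt_sub)
    show "card Mopt \<le> b" by (fact opt_card)
    show "b > 0" by (fact budget)
    show "({}, Mhat) \<in> greedy_step U E \<tau> Rq pv Sp qv p q ^^ b"
      using greedy by (simp add: greedy_outputs_def)
    fix M M' assume "(M, M') \<in> greedy_step U E \<tau> Rq pv Sp qv p q"
    thus "Stil Sp qv q = {} \<and> M' = M \<or>
         (\<exists>u\<in>Stil Sp qv q. (\<forall>v\<in>Stil Sp qv q.
            revenue U E \<tau> Rq pv p q (insert v M) - revenue U E \<tau> Rq pv p q M
            \<le> revenue U E \<tau> Rq pv p q (insert u M) - revenue U E \<tau> Rq pv p q M) \<and> M' = insert u M)"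
      by (simp add: greedy_step_def)
  qed
qed

end
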